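(* Assume (H1). Let $\mathcal H=\begin{pmatrix}A+G&\gamma I\\-\widehat Q&-(A+G)^T\end{pmatrix}\in\mathbb R^{2n\times 2n}$ and $\Phi(t)=e^{\mathcal Ht}=\begin{pmatrix}\Phi_{11}(t)&\Phi_{12}(t)\\\Phi_{21}(t)&\Phi_{22}(t)\end{pmatrix}$ with $n\times n$ blocks. Then $\Phi_{22}(T)-H\Phi_{12}(T)$ is nonsingular.
   Context: Fix $n\ge1$, $T>0$, constant matrices $A,G,\Gamma\in\mathbb R^{n\times n}$, $\gamma>0$, symmetric $Q\ge0$, $H\ge0$ ($n\times n$). Write $\widehat Q=(I-\Gamma)^TQ(I-\Gamma)$ and $\|h\|_{L^2}=(\int_0^T|h|^2dt)^{1/2}$. For $g\in L^2(0,T;\mathbb R^n)$ let $\dot z=(A+G)z+g$, $z(0)=0$, and $\bar J''(g)=\int_0^T\{-z^T\widehat Qz+\frac1\gamma|g|^2\}dt-z(T)^THz(T)$. (H1): there exists $\epsilon_0>0$ with $\bar J''(g)\ge\epsilon_0\|g\|_{L^2}^2$ for all $g\in L^2(0,T;\mathbb R^n)$. *)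

theory Defs
  imports "HOL-Analysis.Analysis"
begin

definition mat_pow :: "real^'m^'m \<Rightarrow> nat \<Rightarrow> real^'m^'m" where
  "mat_pow M k = (((**) M) ^^ k) (mat 1)"

definition mat_exp :: "real^'m^'m \<Rightarrow> real^'m^'m" where
  "mat_exp M = (\<Sum>k. (1 / fact k) *\<^sub>R mat_pow M k)"

definition psd :: "real^'n^'n \<Rightarrow> bool" where
  "psd M \<longleftrightarrow> transpose M = M \<and> (\<forall>x. 0 \<le> x \<bullet> (M *v x))"

definition block_mat :: "real^'n^'n \<Rightarrow> real^'n^'n \<Rightarrow> real^'n^'n \<Rightarrow> real^'n^'n
    \<Rightarrow> real^('n+'n)^('n+'n)" where
  "block_mat M11 M12 M21 M22 = (\<chi> i j. case i of
      Inl a \<Rightarrow> (case j of Inl b \<Rightarrow> M11 $ a $ b | Inr b \<Rightarrow> M12 $ a $ b)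
    | Inr a \<Rightarrow> (case j of Inl b \<Rightarrow> M21 $ a $ b | Inr b \<Rightarrow> M22 $ a $ b))"

definition blk12 :: "real^('n+'n)^('n+'n) \<Rightarrow> real^'n^'n" where
  "blk12 M = (\<chi> a b. M $ Inl a $ Inr b)"

definition blk22 :: "real^('n+'n)^('n+'n) \<Rightarrow> real^'n^'n" where
  "blk22 M = (\<chi> a b. M $ Inr a $ Inr b)"

definition L2_on :: "real \<Rightarrow> (real \<Rightarrow> real^'n) \<Rightarrow> bool" where
  "L2_on T g \<longleftrightarrow> g measurable_on {0..T} \<and> (\<lambda>t. (norm (g t))\<^sup>2) integrable_on {0..T}"

definition L2_norm_sq :: "real \<Rightarrow> (real \<Rightarrow> real^'n) \<Rightarrow> real" where
  "L2_norm_sq T g = integral {0..T} (\<lambda>t. (norm (g t))\<^sup>2)"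

text \<open>z is the (Caratheodory) solution of z' = M z + g, z(0) = 0 on [0,T], in integral form.\<close>
definition is_state :: "real \<Rightarrow> real^'n^'n \<Rightarrow> (real \<Rightarrow> real^'n) \<Rightarrow> (real \<Rightarrow> real^'n) \<Rightarrow> bool" where
  "is_state T M g z \<longleftrightarrow> continuous_on {0..T} z \<and>
     (\<forall>t\<in>{0..T}. (\<lambda>s. M *v z s + g s) integrable_on {0..t} \<and>
                  z t = integral {0..t} (\<lambda>s. M *v z s + g s))"

definition Jpp :: "real \<Rightarrow> real \<Rightarrow> real^'n^'n \<Rightarrow> real^'n^'n \<Rightarrow> (real \<Rightarrow> real^'n) \<Rightarrow> (real \<Rightarrow> real^'n) \<Rightarrow> real" where
  "Jpp T \<gamma> Qh H g z = integral {0..T} (\<lambda>t. - (z t \<bullet> (Qh *v z t)) + (1/\<gamma>) * (norm (g t))\<^sup>2)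
       - z T \<bullet> (H *v z T)"

end

theory Submission
  imports Defs
begin

lemma vps_summable:
  fixes u :: "nat \<Rightarrow> real^'m" and C c t :: real
  assumes b: "\<And>k. norm (u k) \<le> C * c^k" and c: "c \<ge> 0"
  shows "summable (\<lambda>k. (t^k / fact k) *\<^sub>R u k)"
proof (rule summable_comparison_test)
  show "summable (\<lambda>k. C * (inverse (fact k) * (c * \<bar>t\<bar>)^k))"
    by (intro summable_mult summable_exp)
  show "\<exists>N. \<forall>n\<ge>N. norm ((t^n / fact n) *\<^sub>R u n) \<le> C * (inverse (fact n) * (c * \<bar>t\<bar>)^n)"
  proof (intro exI allI impI)
    fix n :: nat
    have "norm ((t^n / fact n) *\<^sub>R u n) = (\<bar>t\<bar>^n / fact n) * norm (u n)"
      by (simp add: power_abs)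
    also have "\<dots> \<le> (\<bar>t\<bar>^n / fact n) * (C * c^n)"
      by (intro mult_left_mono b) auto
    also have "\<dots> = C * (inverse (fact n) * (c * \<bar>t\<bar>)^n)"
      by (simp add: power_mult_distrib field_simps)
    finally show "norm ((t^n / fact n) *\<^sub>R u n) \<le> C * (inverse (fact n) * (c * \<bar>t\<bar>)^n)" .
  qed
qed

lemma vps_deriv:
  fixes u :: "nat \<Rightarrow> real^'m" and C c t :: real
  assumes b: "\<And>k. norm (u k) \<le> C * c^k" and c: "c \<ge> 0"
  shows "((\<lambda>t. \<Sum>k. (t^k / fact k) *\<^sub>R u k) has_vector_derivative
           (\<Sum>k. (t^k / fact k) *\<^sub>R u (Suc k))) (at t)"
proof -
  have b2: "norm (u (Suc k)) \<le> (C*c) * c^k" for k using b[of "Suc k"] by (simp add: algebra_simps)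
  have comp: "(\<Sum>k. (x^k / fact k) *\<^sub>R v k) $ i = (\<Sum>k. (v k $ i / fact k) * x^k)"
    if "summable (\<lambda>k. (x^k / fact k) *\<^sub>R v k)" for x and v :: "nat \<Rightarrow> real^'m" and i
    using bounded_linear.suminf[OF bounded_linear_vec_nth that, of i] by (simp add: ac_simps)
  define Y where "Y = (\<lambda>t. \<Sum>k. (t^k / fact k) *\<^sub>R u k)"
  define Y' where "Y' = (\<Sum>k. (t^k / fact k) *\<^sub>R u (Suc k))"
  have Ycomp: "Y x $ i = (\<Sum>k. (u k $ i / fact k) * x^k)" for x i
    unfolding Y_def by (rule comp[OF vps_summable[OF b c]])
  have Y'comp: "Y' $ i = (\<Sum>k. (u (Suc k) $ i / fact k) * t^k)" for i
    unfolding Y'_def by (rule comp[OF vps_summable[OF b2 c]])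
  have sumc: "summable (\<lambda>k. (u k $ i / fact k) * y^k)" for i y
  proof -
    have "summable (\<lambda>k. ((y^k / fact k) *\<^sub>R u k) $ i)"
      by (rule bounded_linear.summable[OF bounded_linear_vec_nth vps_summable[OF b c]])
    then show ?thesis by (simp add: ac_simps)
  qed
  have der: "((\<lambda>x. Y x $ i) has_real_derivative Y' $ i) (at t)" for i
  proof -
    have "((\<lambda>x. \<Sum>k. (u k $ i / fact k) * x^k) has_field_derivative
             (\<Sum>k. diffs (\<lambda>k. u k $ i / fact k) k * t^k)) (at t)"
      by (rule termdiffs_strong_converges_everywhere) (rule sumc)
    moreover have "diffs (\<lambda>k. u k $ i / fact k) k = u (Suc k) $ i / fact k" for k
      by (simp add: diffs_def)
    ultimately show ?thesis by (simp add: Ycomp Y'comp)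
  qed
  have exp: "Y x = (\<Sum>i\<in>UNIV. (Y x $ i) *\<^sub>R axis i 1)" for x
    by (simp add: vec_eq_iff axis_def if_distrib cong: if_cong)
  have "((\<lambda>x. \<Sum>i\<in>UNIV. (Y x $ i) *\<^sub>R axis i (1::real)) has_vector_derivative
          (\<Sum>i\<in>UNIV. (Y' $ i) *\<^sub>R axis i 1)) (at t)"
    by (intro has_vector_derivative_sum bounded_linear.has_vector_derivative[OF bounded_linear_scaleR_left] der[unfolded has_real_derivative_iff_has_vector_derivative])
  also have "(\<Sum>i\<in>UNIV. (Y' $ i) *\<^sub>R axis i (1::real)) = Y'"
    by (simp add: vec_eq_iff axis_def if_distrib cong: if_cong)
  finally show ?thesis unfolding Y_def[symmetric] Y'_def[symmetric] using exp
    by (metis (no_types, lifting) ext)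
qed


lemma mat_pow_0: "mat_pow M 0 = mat 1" by (simp add: mat_pow_def)
lemma mat_pow_Suc: "mat_pow M (Suc k) = M ** mat_pow M k" by (simp add: mat_pow_def)

lemma mat_pow_vec_Suc: "mat_pow M (Suc k) *v w = M *v (mat_pow M k *v w)"
  by (simp add: mat_pow_Suc matrix_vector_mul_assoc)

lemma mat_pow_bound:
  fixes M :: "real^'m^'m"
  obtains K where "K > 0" "\<And>k w. norm (mat_pow M k *v w) \<le> norm w * K^k"
proof -
  obtain K where K: "K > 0" "\<And>x. norm (M *v x) \<le> norm x * K"
    using bounded_linear.pos_bounded[OF matrix_vector_mul_bounded_linear[of M]] by blast
  have "norm (mat_pow M k *v w) \<le> norm w * K^k" for k w
  proof (induction k)
    case 0 then show ?case by (simp add: mat_pow_0)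
  next
    case (Suc k)
    have "norm (mat_pow M (Suc k) *v w) \<le> norm (mat_pow M k *v w) * K"
      unfolding mat_pow_vec_Suc by (rule K(2))
    also have "\<dots> \<le> norm w * K^k * K" using Suc K(1) by (intro mult_right_mono) auto
    finally show ?case by (simp add: algebra_simps)
  qed
  then show ?thesis using that K(1) by blast
qed

lemma mat_norm_le:
  fixes P :: "real^'m^'m"
  shows "norm P \<le> (\<Sum>i\<in>(UNIV::'m set). \<Sum>j\<in>UNIV. norm (P *v axis j 1))"
proof -
  have "norm P \<le> (\<Sum>i\<in>UNIV. norm (P $ i))"
    by (simp add: norm_vec_def L2_set_le_sum)
  also have "\<dots> \<le> (\<Sum>i\<in>(UNIV::'m set). \<Sum>j\<in>UNIV. norm (P *v axis j 1))"
  proof (intro sum_mono)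
    fix i
    have "norm (P $ i) \<le> (\<Sum>j\<in>UNIV. \<bar>P $ i $ j\<bar>)" by (rule norm_le_l1_cart)
    also have "\<dots> \<le> (\<Sum>j\<in>UNIV. norm (P *v axis j 1))"
    proof (intro sum_mono)
      fix j
      have "P $ i $ j = (P *v axis j 1) $ i"
        by (simp add: matrix_vector_mult_def axis_def if_distrib cong: if_cong)
      then show "\<bar>P $ i $ j\<bar> \<le> norm (P *v axis j 1)" using component_le_norm_cart by metis
    qed
    finally show "norm (P $ i) \<le> (\<Sum>j\<in>UNIV. norm (P *v axis j 1))" .
  qed
  finally show ?thesis .
qed

lemma mat_exp_summable:
  fixes M :: "real^'m^'m"
  shows "summable (\<lambda>k. (1 / fact k) *\<^sub>R mat_pow M k)"
proof -
  obtain K where K: "K > 0" "\<And>k w. norm (mat_pow M k *v w) \<le> norm w * K^k"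
    using mat_pow_bound by blast
  define D where "D = (\<Sum>i\<in>(UNIV::'m set). \<Sum>j\<in>(UNIV::'m set). norm (axis j (1::real)))"
  show ?thesis
  proof (rule summable_comparison_test)
    show "summable (\<lambda>k. D * (inverse (fact k) * K^k))"
      by (intro summable_mult summable_exp)
    show "\<exists>N. \<forall>n\<ge>N. norm ((1 / fact n) *\<^sub>R mat_pow M n) \<le> D * (inverse (fact n) * K^n)"
    proof (intro exI allI impI)
      fix n :: nat
      have "norm (mat_pow M n) \<le> (\<Sum>i\<in>(UNIV::'m set). \<Sum>j\<in>UNIV. norm (mat_pow M n *v axis j 1))"
        by (rule mat_norm_le)
      also have "\<dots> \<le> (\<Sum>i\<in>(UNIV::'m set). \<Sum>j\<in>(UNIV::'m set). norm (axis j (1::real)) * K^n)"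
        by (intro sum_mono K(2))
      also have "\<dots> = D * K^n" by (simp add: D_def sum_distrib_right)
      finally have "norm (mat_pow M n) \<le> D * K^n" .
      then show "norm ((1 / fact n) *\<^sub>R mat_pow M n) \<le> D * (inverse (fact n) * K^n)"
        by (simp add: divide_simps)
    qed
  qed
qed

lemma bl_mv: "bounded_linear (\<lambda>P::real^'m^'n. P *v w)"
proof -
  have "linear (\<lambda>P::real^'m^'n. P *v w)"
    by (rule linearI) (auto simp: algebra_simps scaleR_matrix_vector_assoc)
  then show ?thesis using linear_conv_bounded_linear by blast
qed

lemma mat_exp_vec:
  fixes M :: "real^'m^'m"
  shows "mat_exp M *v w = (\<Sum>k. (1 / fact k) *\<^sub>R (mat_pow M k *v w))"
  unfolding mat_exp_def
  using bounded_linear.suminf[OF bl_mv[of w] mat_exp_summable[of M]]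
  by (simp add: scaleR_matrix_vector_assoc)

lemma mat_pow_scale_vec:
  fixes M :: "real^'m^'m"
  shows "mat_pow (t *\<^sub>R M) k *v w = t^k *\<^sub>R (mat_pow M k *v w)"
  by (induction k) (simp_all add: mat_pow_0 mat_pow_vec_Suc matrix_vector_mult_scaleR
      scaleR_matrix_vector_assoc[symmetric])


lemma exp_traj:
  fixes N :: "real^'m^'m" and w :: "real^'m"
  shows "((\<lambda>t. mat_exp (t *\<^sub>R N) *v w) has_vector_derivative N *v (mat_exp (t *\<^sub>R N) *v w)) (at t)"
    and "mat_exp (0 *\<^sub>R N) *v w = w"
proof -
  define u where "u = (\<lambda>k. mat_pow N k *v w)"
  obtain K where K: "K > 0" "\<And>k w. norm (mat_pow N k *v w) \<le> norm w * K^k"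
    using mat_pow_bound by blast
  have b: "norm (u k) \<le> norm w * K^k" for k unfolding u_def by (rule K(2))
  have Y: "mat_exp (t *\<^sub>R N) *v w = (\<Sum>k. (t^k / fact k) *\<^sub>R u k)" for t
    unfolding mat_exp_vec mat_pow_scale_vec u_def by simp
  have "(\<Sum>k. (t^k / fact k) *\<^sub>R u (Suc k)) = (\<Sum>k. N *v ((t^k / fact k) *\<^sub>R u k))"
    by (simp add: u_def mat_pow_vec_Suc matrix_vector_mult_scaleR)
  also have "\<dots> = N *v (\<Sum>k. (t^k / fact k) *\<^sub>R u k)"
    using bounded_linear.suminf[OF matrix_vector_mul_bounded_linear vps_summable[OF b], of N t] K(1)
    by simp
  finally have e: "(\<Sum>k. (t^k / fact k) *\<^sub>R u (Suc k)) = N *v (\<Sum>k. (t^k / fact k) *\<^sub>R u k)" .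
  show "((\<lambda>t. mat_exp (t *\<^sub>R N) *v w) has_vector_derivative N *v (mat_exp (t *\<^sub>R N) *v w)) (at t)"
    unfolding Y e[symmetric] by (rule vps_deriv[OF b]) (use K(1) in simp)
  have "(\<lambda>k. ((0::real)^k / fact k) *\<^sub>R u k) = (\<lambda>k. if k = 0 then u k else 0)"
    by (auto simp: fun_eq_iff)
  then have "(\<Sum>k. ((0::real)^k / fact k) *\<^sub>R u k) = u 0"
    using sums_single[of 0 u] sums_unique by metis
  then show "mat_exp (0 *\<^sub>R N) *v w = w" unfolding Y by (simp add: u_def mat_pow_0)
qed


definition P1 :: "real^('n+'n) \<Rightarrow> real^'n" where "P1 y = (\<chi> a. y $ Inl a)"
definition P2 :: "real^('n+'n) \<Rightarrow> real^'n" where "P2 y = (\<chi> a. y $ Inr a)"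
definition Jv :: "real^'n \<Rightarrow> real^('n+'n)" where "Jv v = (\<chi> i. case i of Inl _ \<Rightarrow> 0 | Inr b \<Rightarrow> v $ b)"

lemma sum_UNIV_Plus:
  "(\<Sum>x\<in>(UNIV::('a::finite+'b::finite) set). f x) = (\<Sum>a\<in>UNIV. f (Inl a)) + (\<Sum>b\<in>UNIV. f (Inr b))"
  by (subst UNIV_Plus_UNIV[symmetric], subst sum.Plus) (auto simp: o_def)

lemma bl_P1: "bounded_linear P1"
proof -
  have "linear P1" by (rule linearI) (auto simp: P1_def vec_eq_iff)
  then show ?thesis using linear_conv_bounded_linear by blast
qed

lemma bl_P2: "bounded_linear P2"
proof -
  have "linear P2" by (rule linearI) (auto simp: P2_def vec_eq_iff)
  then show ?thesis using linear_conv_bounded_linear by blast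
qed

lemma P1_J: "P1 (Jv v) = 0" by (simp add: P1_def Jv_def vec_eq_iff)
lemma P2_J: "P2 (Jv v) = v" by (simp add: P2_def Jv_def vec_eq_iff)

lemma blk12_vec: "blk12 M *v v = P1 (M *v Jv v)"
  by (simp add: blk12_def P1_def Jv_def matrix_vector_mult_def vec_eq_iff sum_UNIV_Plus)

lemma blk22_vec: "blk22 M *v v = P2 (M *v Jv v)"
  by (simp add: blk22_def P2_def Jv_def matrix_vector_mult_def vec_eq_iff sum_UNIV_Plus)

lemma block_P1: "P1 (block_mat M11 M12 M21 M22 *v y) = M11 *v P1 y + M12 *v P2 y"
  by (simp add: block_mat_def P1_def P2_def matrix_vector_mult_def vec_eq_iff sum_UNIV_Plus)

lemma block_P2: "P2 (block_mat M11 M12 M21 M22 *v y) = M21 *v P1 y + M22 *v P2 y"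
  by (simp add: block_mat_def P1_def P2_def matrix_vector_mult_def vec_eq_iff sum_UNIV_Plus)

lemma scal_mat1: "(c *\<^sub>R mat 1) *v (x::real^'n) = c *\<^sub>R x"
  by (simp add: scaleR_matrix_vector_assoc[symmetric])

lemma tr_inner: "(transpose M *v x) \<bullet> (y::real^'n) = x \<bullet> (M *v y)"
  by (simp add: dot_lmul_matrix)


lemma neg_mat_vec: "(- M) *v (x::real^'n) = - (M *v x)"
  by (simp add: matrix_vector_mult_def vec_eq_iff sum_negf)

lemma norm_mult_norm_inner: "norm x * norm x = x \<bullet> x"
  by (simp add: power2_norm_eq_inner[symmetric] power2_eq_square)

theorem proposition7:
  fixes A G \<Gamma> Q H :: "real^'n^'n" and \<gamma> T :: real
  assumes "T > 0" and "\<gamma> > 0" and "psd Q" and "psd H"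
  assumes H1: "\<exists>\<epsilon>0>0. \<forall>g z. L2_on T g \<longrightarrow>
      is_state T (A + G) g z \<longrightarrow>
      Jpp T \<gamma> (transpose (mat 1 - \<Gamma>) ** Q ** (mat 1 - \<Gamma>)) H g z \<ge> \<epsilon>0 * L2_norm_sq T g"
  shows "invertible
    (let Qh = transpose (mat 1 - \<Gamma>) ** Q ** (mat 1 - \<Gamma>);
         \<H> = block_mat (A + G) (\<gamma> *\<^sub>R mat 1) (- Qh) (- transpose (A + G));
         \<Phi> = mat_exp (T *\<^sub>R \<H>)
     in blk22 \<Phi> - H ** blk12 \<Phi>)"
proof -
  define Qh where "Qh = transpose (mat 1 - \<Gamma>) ** Q ** (mat 1 - \<Gamma>)"
  define N where "N = block_mat (A + G) (\<gamma> *\<^sub>R mat 1) (- Qh) (- transpose (A + G))"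
  define \<Phi> where "\<Phi> = mat_exp (T *\<^sub>R N)"
  obtain \<epsilon> where \<epsilon>: "\<epsilon> > 0" and E: "\<And>g z. L2_on T g \<Longrightarrow> is_state T (A + G) g z \<Longrightarrow>
      Jpp T \<gamma> Qh H g z \<ge> \<epsilon> * L2_norm_sq T g"
    using H1 unfolding Qh_def by blast
  have ker: "v = 0" if hv: "(blk22 \<Phi> - H ** blk12 \<Phi>) *v v = 0" for v
  proof -
    define w where "w = Jv v"
    define Y where "Y = (\<lambda>t. mat_exp (t *\<^sub>R N) *v w)"
    define z where "z = (\<lambda>t. P1 (Y t))"
    define l where "l = (\<lambda>t. P2 (Y t))"
    define g where "g = (\<lambda>t. \<gamma> *\<^sub>R l t)"
    have DY: "(Y has_vector_derivative N *v Y t) (at t)" for t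
      unfolding Y_def by (rule exp_traj(1))
    have Dz: "(z has_vector_derivative (A + G) *v z t + g t) (at t)" for t
      using bounded_linear.has_vector_derivative[OF bl_P1 DY[of t]]
      by (simp add: z_def l_def g_def N_def block_P1 scal_mat1)
    have Dl: "(l has_vector_derivative - (Qh *v z t) - transpose (A + G) *v l t) (at t)" for t
      using bounded_linear.has_vector_derivative[OF bl_P2 DY[of t]]
      by (simp add: z_def l_def N_def block_P2 neg_mat_vec)
    have z0: "z 0 = 0" and l0: "l 0 = v"
      using exp_traj(2)[of N w] by (simp_all add: z_def l_def Y_def w_def P1_J P2_J)
    have zT: "blk12 \<Phi> *v v = z T" and lT: "blk22 \<Phi> *v v = l T"
      by (simp_all add: blk12_vec blk22_vec z_def l_def Y_def \<Phi>_def w_def)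
    have lHz: "l T = H *v z T"
      using hv by (simp add: matrix_vector_mult_diff_rdistrib matrix_vector_mul_assoc[symmetric] zT lT)
    have cz: "continuous_on S z" for S
      using Dz has_vector_derivative_continuous continuous_at_imp_continuous_on by blast
    have cl: "continuous_on S l" for S
      using Dl has_vector_derivative_continuous continuous_at_imp_continuous_on by blast
    have cg: "continuous_on S g" for S
      unfolding g_def by (intro continuous_intros cl)
    have cng: "continuous_on S (\<lambda>t. (norm (g t))\<^sup>2)" for S
      by (intro continuous_intros cg)
    have L2: "L2_on T g"
      unfolding L2_on_def
    proof
      show "g measurable_on {0..T}"
        by (subst measurable_on_iff_borel_measurable)
           (auto intro!: continuous_imp_measurable_on_sets_lebesgue cg)
      show "(\<lambda>t. (norm (g t))\<^sup>2) integrable_on {0..T}"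
        by (rule integrable_continuous_interval[OF cng])
    qed
    have st: "is_state T (A + G) g z"
      unfolding is_state_def
    proof (intro conjI ballI cz)
      fix t assume t: "t \<in> {0..T}"
      have "((\<lambda>s. (A + G) *v z s + g s) has_integral (z t - z 0)) {0..t}"
        using t by (intro fundamental_theorem_of_calculus has_vector_derivative_at_within[OF Dz]) auto
      then show "(\<lambda>s. (A + G) *v z s + g s) integrable_on {0..t}"
        and "z t = integral {0..t} (\<lambda>s. (A + G) *v z s + g s)"
        by (auto simp: z0 has_integral_integrable_integral)
    qed
    define F where "F = (\<lambda>t. l t \<bullet> z t)"
    have DF: "(F has_vector_derivative
        (- (z t \<bullet> (Qh *v z t)) + (1/\<gamma>) * (norm (g t))\<^sup>2)) (at t)" for t
    proof -
      have "(F has_vector_derivative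
          (l t \<bullet> ((A + G) *v z t + g t) + (- (Qh *v z t) - transpose (A + G) *v l t) \<bullet> z t)) (at t)"
        unfolding F_def
        by (rule bounded_bilinear.has_vector_derivative[OF bounded_bilinear_inner Dl Dz])
      moreover have "l t \<bullet> ((A + G) *v z t + g t) + (- (Qh *v z t) - transpose (A + G) *v l t) \<bullet> z t
          = - (z t \<bullet> (Qh *v z t)) + (1/\<gamma>) * (norm (g t))\<^sup>2"
        using \<open>\<gamma> > 0\<close> norm_mult_norm_inner[of "l t"]
        by (simp add: g_def dot_lmul_matrix tr_inner inner_add_right inner_diff_left inner_commute[of "Qh *v z t"]
            power2_norm_eq_inner power2_eq_square field_simps)
      ultimately show ?thesis by simp
    qed
    have "((\<lambda>t. - (z t \<bullet> (Qh *v z t)) + (1/\<gamma>) * (norm (g t))\<^sup>2) has_integral (F T - F 0)) {0..T}"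
      using \<open>T > 0\<close> by (intro fundamental_theorem_of_calculus has_vector_derivative_at_within[OF DF]) auto
    then have "integral {0..T} (\<lambda>t. - (z t \<bullet> (Qh *v z t)) + (1/\<gamma>) * (norm (g t))\<^sup>2) = l T \<bullet> z T"
      by (simp add: F_def z0 integral_unique)
    then have J0: "Jpp T \<gamma> Qh H g z = 0"
      by (simp add: Jpp_def lHz inner_commute)
    have "\<epsilon> * L2_norm_sq T g \<le> 0" using E[OF L2 st] J0 by simp
    then have le: "L2_norm_sq T g \<le> 0" using \<epsilon> by (simp add: mult_le_0_iff)
    have "0 \<le> L2_norm_sq T g" unfolding L2_norm_sq_def
      by (intro integral_nonneg integrable_continuous_interval[OF cng]) auto
    with le have "integral {0..T} (\<lambda>t. (norm (g t))\<^sup>2) = 0" by (simp add: L2_norm_sq_def)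
    then have "\<forall>t\<in>{0..T}. (norm (g t))\<^sup>2 = 0"
      using integral_eq_0_iff[OF cng \<open>T > 0\<close>] by simp
    then have "(norm (g 0))\<^sup>2 = 0" using \<open>T > 0\<close> by simp
    then show "v = 0" using \<open>\<gamma> > 0\<close> by (simp add: g_def l0)
  qed
  have "invertible (blk22 \<Phi> - H ** blk12 \<Phi>)"
    unfolding invertible_left_inverse matrix_left_invertible_ker using ker by blast
  then show ?thesis unfolding Let_def Qh_def[symmetric] N_def[symmetric] \<Phi>_def[symmetric] .
qed

end
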